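(* Let $S$ be a stable semigroup. If $S$ is DSC, then $S$ is a group.
   Context: Green's relations on $S$: $s\,\mathcal{R}\,t\iff sS^1=tS^1$, $s\,\mathcal{L}\,t\iff S^1s=S^1t$, $s\,\mathcal{J}\,t\iff S^1sS^1=S^1tS^1$, where $S^1$ is $S$ with an identity adjoined. $S$ is stable if for all $s,x\in S$: $x\,\mathcal{J}\,sx\Rightarrow x\,\mathcal{L}\,sx$ and $x\,\mathcal{J}\,xs\Rightarrow x\,\mathcal{R}\,xs$. A diagonal subsemigroup of $S\times S$ is a subsemigroup containing $\{(s,s)\colon s\in S\}$; a congruence is a symmetric and transitive diagonal subsemigroup; $S$ is DSC if every diagonal subsemigroup of $S\times S$ is a congruence on $S$. *)

theory Defs
  imports Main
begin

text \<open>Principal ideals using S^1 (S with identity adjoined), for a semigroup given as a type.\<close>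
definition right_ideal1 :: "'a::semigroup_mult \<Rightarrow> 'a set" where
  "right_ideal1 s = insert s {s * x | x. True}"

definition left_ideal1 :: "'a::semigroup_mult \<Rightarrow> 'a set" where
  "left_ideal1 s = insert s {x * s | x. True}"

definition two_ideal1 :: "'a::semigroup_mult \<Rightarrow> 'a set" where
  "two_ideal1 s = {s} \<union> {x * s | x. True} \<union> {s * y | y. True} \<union> {x * s * y | x y. True}"

definition greenR :: "'a::semigroup_mult \<Rightarrow> 'a \<Rightarrow> bool" where
  "greenR s t \<longleftrightarrow> right_ideal1 s = right_ideal1 t"

definition greenL :: "'a::semigroup_mult \<Rightarrow> 'a \<Rightarrow> bool" where
  "greenL s t \<longleftrightarrow> left_ideal1 s = left_ideal1 t"

definition greenJ :: "'a::semigroup_mult \<Rightarrow> 'a \<Rightarrow> bool" where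
  "greenJ s t \<longleftrightarrow> two_ideal1 s = two_ideal1 t"

definition stable_semigroup :: "'a::semigroup_mult itself \<Rightarrow> bool" where
  "stable_semigroup _ \<longleftrightarrow>
     (\<forall>s x::'a. (greenJ x (s * x) \<longrightarrow> greenL x (s * x)) \<and>
                (greenJ x (x * s) \<longrightarrow> greenR x (x * s)))"

definition diagonal_subsemigroup :: "('a::semigroup_mult \<times> 'a) set \<Rightarrow> bool" where
  "diagonal_subsemigroup D \<longleftrightarrow>
     (\<forall>s. (s, s) \<in> D) \<and>
     (\<forall>a b c d. (a, b) \<in> D \<longrightarrow> (c, d) \<in> D \<longrightarrow> (a * c, b * d) \<in> D)"

definition is_congruence :: "('a::semigroup_mult \<times> 'a) set \<Rightarrow> bool" where
  "is_congruence D \<longleftrightarrow> diagonal_subsemigroup D \<and> sym D \<and> trans D"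

definition DSC :: "'a::semigroup_mult itself \<Rightarrow> bool" where
  "DSC _ \<longleftrightarrow> (\<forall>D :: ('a \<times> 'a) set. diagonal_subsemigroup D \<longrightarrow> is_congruence D)"

definition is_group :: "'a::semigroup_mult itself \<Rightarrow> bool" where
  "is_group _ \<longleftrightarrow> (\<exists>e::'a. (\<forall>x. e * x = x \<and> x * e = x) \<and> (\<forall>x. \<exists>y. x * y = e \<and> y * x = e))"

end

theory Submission
  imports Defs
begin

lemma two_ideal_closed:
  fixes a x u :: "'a::semigroup_mult"
  shows "x \<in> two_ideal1 a \<Longrightarrow> x * u \<in> two_ideal1 a"
    and "u \<in> two_ideal1 a \<Longrightarrow> x * u \<in> two_ideal1 a"
  unfolding two_ideal1_def
  by (auto simp: mult.assoc) (metis mult.assoc)+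

lemma simple:
  assumes "DSC TYPE('a::semigroup_mult)"
  shows "\<forall>a b::'a. b \<in> two_ideal1 a"
proof (intro allI)
  fix a b :: 'a
  define D where "D = {(x::'a,y). x = y \<or> x \<in> two_ideal1 a}"
  have "diagonal_subsemigroup D"
    unfolding diagonal_subsemigroup_def D_def
  proof (intro conjI allI impI)
    fix s show "(s, s) \<in> {(x, y). x = y \<or> x \<in> two_ideal1 a}" by simp
  next
    fix x y u v :: 'a
    assume "(x, y) \<in> {(x, y). x = y \<or> x \<in> two_ideal1 a}"
      and "(u, v) \<in> {(x, y). x = y \<or> x \<in> two_ideal1 a}"
    then show "(x * u, y * v) \<in> {(x, y). x = y \<or> x \<in> two_ideal1 a}"
      using two_ideal_closed[of x a u] two_ideal_closed[of u a x] by auto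
  qed
  then have "sym D" using assms unfolding DSC_def is_congruence_def by blast
  moreover have "(a,b) \<in> D" unfolding D_def two_ideal1_def by auto
  ultimately have "(b,a) \<in> D" by (meson symD)
  then show "b \<in> two_ideal1 a" unfolding D_def two_ideal1_def by auto
qed

lemma allJ:
  assumes "DSC TYPE('a::semigroup_mult)"
  shows "greenJ (x::'a) y"
proof -
  have "\<And>z::'a. two_ideal1 z = UNIV" using simple[OF assms] by auto
  then show ?thesis unfolding greenJ_def by simp
qed

theorem mainTheorem5:
  assumes "stable_semigroup TYPE('a::semigroup_mult)"
    and "DSC TYPE('a)"
  shows "is_group TYPE('a)"
proof -
  have F1: "\<And>x u::'a. greenR x (x*u)" using assms allJ unfolding stable_semigroup_def by blast
  have F2: "\<And>x u::'a. greenL u (x*u)" using assms allJ unfolding stable_semigroup_def by blast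
  have allR: "greenR a b" for a b :: 'a
  proof -
    define D where "D = {(x::'a,y). greenL x y \<and> (greenR x y \<or> (greenR x a \<and> greenR y b))}"
    have "diagonal_subsemigroup D"
      unfolding diagonal_subsemigroup_def D_def
    proof (intro conjI allI impI)
      fix s show "(s,s) \<in> {(x, y). greenL x y \<and> (greenR x y \<or> greenR x a \<and> greenR y b)}"
        by (simp add: greenL_def greenR_def)
    next
      fix x y u v :: 'a
      assume h1: "(x, y) \<in> {(x, y). greenL x y \<and> (greenR x y \<or> greenR x a \<and> greenR y b)}"
        and h2: "(u, v) \<in> {(x, y). greenL x y \<and> (greenR x y \<or> greenR x a \<and> greenR y b)}"
      have l: "greenL (x*u) (y*v)" using h2 F2[of u x] F2[of v y] by (auto simp: greenL_def)
      have r: "greenR (x*u) (y*v) \<or> greenR (x*u) a \<and> greenR (y*v) b"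
        using h1 F1[of x u] F1[of y v] by (auto simp: greenR_def)
      show "(x * u, y * v) \<in> {(x, y). greenL x y \<and> (greenR x y \<or> greenR x a \<and> greenR y b)}"
        using l r by simp
    qed
    then have "sym D" using assms(2) unfolding DSC_def is_congruence_def by blast
    moreover have "(a*b, b*b) \<in> D"
      using F1[of a b] F1[of b b] F2[of b a] F2[of b b] unfolding D_def
      by (auto simp: greenL_def greenR_def)
    ultimately have "(b*b, a*b) \<in> D" by (meson symD)
    then show ?thesis using F1[of a b] F1[of b b] unfolding D_def
      by (auto simp: greenR_def)
  qed
  have allL: "greenL a b" for a b :: 'a
  proof -
    define D where "D = {(x::'a,y). greenR x y \<and> (greenL x y \<or> (greenL x a \<and> greenL y b))}"
    have "diagonal_subsemigroup D"
      unfolding diagonal_subsemigroup_def D_def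
    proof (intro conjI allI impI)
      fix s show "(s,s) \<in> {(x, y). greenR x y \<and> (greenL x y \<or> greenL x a \<and> greenL y b)}"
        by (simp add: greenL_def greenR_def)
    next
      fix x y u v :: 'a
      assume h1: "(x, y) \<in> {(x, y). greenR x y \<and> (greenL x y \<or> greenL x a \<and> greenL y b)}"
        and h2: "(u, v) \<in> {(x, y). greenR x y \<and> (greenL x y \<or> greenL x a \<and> greenL y b)}"
      have l: "greenR (x*u) (y*v)" using h1 F1[of x u] F1[of y v] by (auto simp: greenR_def)
      have r: "greenL (x*u) (y*v) \<or> greenL (x*u) a \<and> greenL (y*v) b"
        using h2 F2[of u x] F2[of v y] by (auto simp: greenL_def)
      show "(x * u, y * v) \<in> {(x, y). greenR x y \<and> (greenL x y \<or> greenL x a \<and> greenL y b)}"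
        using l r by simp
    qed
    then have "sym D" using assms(2) unfolding DSC_def is_congruence_def by blast
    moreover have "(a*a, a*b) \<in> D"
      using F2[of a a] F2[of b a] F1[of a a] F1[of a b] unfolding D_def
      by (auto simp: greenL_def greenR_def)
    ultimately have "(a*b, a*a) \<in> D" by (meson symD)
    then show ?thesis using F2[of a a] F2[of b a] unfolding D_def
      by (auto simp: greenL_def)
  qed
  have rdiv: "\<exists>x. b = a * x" for a b :: 'a
  proof -
    have "a \<in> right_ideal1 (a*a)" using allR[of a "a*a"] unfolding greenR_def by (metis insertI1 right_ideal1_def)
    then obtain z where z: "a = a * z" unfolding right_ideal1_def by (auto simp: mult.assoc)
    have "b \<in> right_ideal1 a" using allR[of b a] unfolding greenR_def by (metis insertI1 right_ideal1_def)
    then show ?thesis using z unfolding right_ideal1_def by auto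
  qed
  have ldiv: "\<exists>x. b = x * a" for a b :: 'a
  proof -
    have "a \<in> left_ideal1 (a*a)" using allL[of a "a*a"] unfolding greenL_def by (metis insertI1 left_ideal1_def)
    then obtain z where z: "a = z * a" unfolding left_ideal1_def by (auto simp: mult.assoc[symmetric])
    have "b \<in> left_ideal1 a" using allL[of b a] unfolding greenL_def by (metis insertI1 left_ideal1_def)
    then show ?thesis using z unfolding left_ideal1_def by auto
  qed
  obtain a :: 'a where True by simp
  obtain e where e: "a = a * e" using rdiv by blast
  have eR: "x * e = x" for x
  proof -
    obtain y where "x = y * a" using ldiv by blast
    then show ?thesis using e by (metis mult.assoc)
  qed
  obtain f where f: "a = f * a" using ldiv by blast
  have fL: "f * x = x" for x
  proof -
    obtain y where "x = a * y" using rdiv by blast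
    then show ?thesis using f by (metis mult.assoc)
  qed
  have ef: "e = f" using eR[of f] fL[of e] by simp
  have inv: "\<exists>y. x * y = e \<and> y * x = e" for x
  proof -
    obtain y where y: "e = x * y" using rdiv by blast
    obtain y' where y': "e = y' * x" using ldiv by blast
    have "y' = y" by (metis y y' eR fL ef mult.assoc)
    then show ?thesis using y y' by auto
  qed
  show ?thesis unfolding is_group_def using inv eR fL ef by blast
qed

end
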